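(* Let $f(a)=\alpha_d a^d+\dots+\alpha_1 a+\alpha_0$ be a real polynomial of degree $d\ge 1$ (so $\alpha_d\neq 0$), and let $S$ be the set of real roots of $f$ lying in the open interval $(0,1)$. Then there is a $3$-person game in which the first player has two pure strategies and the second and third players each have $\lceil d/2\rceil+1$ pure strategies, such that, letting $E$ denote the set of totally mixed Nash equilibria of this game, the projection of $E$ onto the probability that the first player plays her first pure strategy equals $S$, and $\#E=\#S$.
   Context: A finite normal form game consists of players $I=\{1,\dots,N\}$, finite pure strategy sets $S_i=\{s_{i0},\dots,s_{id_i}\}$, and payoffs $u_i:\prod_i S_i\to\mathbb{R}$. A mixed strategy of player $i$ is a probability vector $\sigma_i$ on $S_i$; expected payoffs are multilinear: $u_i(\sigma)=\sum_{s}u_i(s)\prod_k\sigma_k(s_k)$, and $u_i(s_{ij},\sigma_{-i})$ denotes player $i$'s expected payoff when $i$ plays $s_{ij}$ and the others play according to $\sigma$. A profile $\sigma$ is a totally mixed Nash equilibrium if $0<\sigma_i(s_{ij})<1$ for all $i,j$ and $u_i(s_{ij},\sigma_{-i})=u_i(s_{i0},\sigma_{-i})$ for all $i$ and $j=1,\dots,d_i$. *)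

theory Defs
  imports Complex_Main "HOL-Computational_Algebra.Polynomial"
begin

(* A finite normal form game with N = length ns players; player i has pure
   strategies 0,...,ns!i - 1 (strategy 0 is s_{i0}); payoffs u i s for a pure
   profile s (a list of length N). Mixed profiles are lists of probability
   vectors: sigma!i!j = probability player i plays strategy j. *)

definition pure_profiles :: "nat list \<Rightarrow> nat list set" where
  "pure_profiles ns = {s. length s = length ns \<and> (\<forall>k<length ns. s!k < ns!k)}"

definition dev_payoff ::
  "nat list \<Rightarrow> (nat \<Rightarrow> nat list \<Rightarrow> real) \<Rightarrow> nat \<Rightarrow> nat \<Rightarrow> real list list \<Rightarrow> real" where
  "dev_payoff ns u i j \<sigma> =
     (\<Sum>s\<in>{s\<in>pure_profiles ns. s!i = j}.
        u i s * (\<Prod>k\<in>{..<length ns} - {i}. \<sigma>!k!(s!k)))"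

definition mixed_profile :: "nat list \<Rightarrow> real list list \<Rightarrow> bool" where
  "mixed_profile ns \<sigma> \<longleftrightarrow> length \<sigma> = length ns \<and>
     (\<forall>i<length ns. length (\<sigma>!i) = ns!i \<and> (\<forall>j<ns!i. 0 \<le> \<sigma>!i!j)
        \<and> sum_list (\<sigma>!i) = 1)"

definition totally_mixed_NE ::
  "nat list \<Rightarrow> (nat \<Rightarrow> nat list \<Rightarrow> real) \<Rightarrow> real list list \<Rightarrow> bool" where
  "totally_mixed_NE ns u \<sigma> \<longleftrightarrow> mixed_profile ns \<sigma> \<and>
     (\<forall>i<length ns. \<forall>j<ns!i. 0 < \<sigma>!i!j \<and> \<sigma>!i!j < 1) \<and>
     (\<forall>i<length ns. \<forall>j. 1 \<le> j \<and> j < ns!i \<longrightarrow>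
        dev_payoff ns u i j \<sigma> = dev_payoff ns u i 0 \<sigma>)"

end

theory Submission
  imports Defs
begin


lemma pp3: "pure_profiles [a,b,c] = (\<lambda>(x,y,z). [x,y,z]) ` ({..<a} \<times> {..<b} \<times> {..<c})"
proof (rule set_eqI, rule iffI)
  fix s assume "s \<in> pure_profiles [a,b,c]"
  hence l: "length s = 3" and h: "\<forall>k<3. s!k < [a,b,c]!k" unfolding pure_profiles_def by auto
  have "s = [s!0, s!1, s!2]" using l
    by (auto intro!: nth_equalityI simp: less_Suc_eq numeral_eq_Suc)
  moreover have "s!0 < a" "s!1 < b" "s!2 < c" using h[rule_format, of 0] h[rule_format, of 1] h[rule_format, of 2] by auto
  ultimately show "s \<in> (\<lambda>(x,y,z). [x,y,z]) ` ({..<a} \<times> {..<b} \<times> {..<c})"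
    by (auto intro!: image_eqI[where x="(s!0,s!1,s!2)"])
next
  fix s assume "s \<in> (\<lambda>(x,y,z). [x,y,z]) ` ({..<a} \<times> {..<b} \<times> {..<c})"
  then show "s \<in> pure_profiles [a,b,c]" unfolding pure_profiles_def
    by (auto simp: less_Suc_eq numeral_eq_Suc)
qed

lemma dev0: assumes "j < a"
  shows "dev_payoff [a,b,c] u 0 j \<sigma> = (\<Sum>y<b. \<Sum>z<c. u 0 [j,y,z] * (\<sigma>!1!y * \<sigma>!2!z))"
proof -
  have e: "{s\<in>pure_profiles [a,b,c]. s!0 = j} = (\<lambda>(y,z). [j,y,z]) ` ({..<b}\<times>{..<c})"
    using assms unfolding pp3 by (auto simp: image_iff)
  have i: "inj_on (\<lambda>(y,z). [j,y,z]) ({..<b}\<times>{..<c})" by (auto simp: inj_on_def)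
  have p: "{..<length [a,b,c]} - {0} = {1,2::nat}" by auto
  show ?thesis unfolding dev_payoff_def e p
    by (subst sum.reindex[OF i]) (simp add: sum.cartesian_product split_def)
qed

lemma dev1: assumes "j < b"
  shows "dev_payoff [a,b,c] u 1 j \<sigma> = (\<Sum>x<a. \<Sum>z<c. u 1 [x,j,z] * (\<sigma>!0!x * \<sigma>!2!z))"
proof -
  have e: "{s\<in>pure_profiles [a,b,c]. s!1 = j} = (\<lambda>(x,z). [x,j,z]) ` ({..<a}\<times>{..<c})"
    using assms unfolding pp3 by (auto simp: image_iff)
  have i: "inj_on (\<lambda>(x,z). [x,j,z]) ({..<a}\<times>{..<c})" by (auto simp: inj_on_def)
  have p: "{..<length [a,b,c]} - {1} = {0,2::nat}" by auto
  show ?thesis unfolding dev_payoff_def e p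
    by (subst sum.reindex[OF i]) (simp add: sum.cartesian_product split_def)
qed

lemma dev2: assumes "j < c"
  shows "dev_payoff [a,b,c] u 2 j \<sigma> = (\<Sum>x<a. \<Sum>y<b. u 2 [x,y,j] * (\<sigma>!0!x * \<sigma>!1!y))"
proof -
  have e: "{s\<in>pure_profiles [a,b,c]. s!2 = j} = (\<lambda>(x,y). [x,y,j]) ` ({..<a}\<times>{..<b})"
    using assms unfolding pp3 by (auto simp: image_iff)
  have i: "inj_on (\<lambda>(x,y). [x,y,j]) ({..<a}\<times>{..<b})" by (auto simp: inj_on_def)
  have p: "{..<length [a,b,c]} - {2} = {0,1::nat}" by auto
  show ?thesis unfolding dev_payoff_def e p
    by (subst sum.reindex[OF i]) (simp add: sum.cartesian_product split_def)
qed



definition cf :: "real poly \<Rightarrow> nat \<Rightarrow> nat \<Rightarrow> nat \<Rightarrow> real" where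
  "cf f n y z = (if z = 0 then coeff f y else if y = n then coeff f (n+z) else 0)"

definition gpay :: "real poly \<Rightarrow> nat \<Rightarrow> nat \<Rightarrow> nat list \<Rightarrow> real" where
  "gpay f n i s = (if i = 0 then (if s!0 = 1 then cf f n (s!1) (s!2) else 0)
     else if i = 1 then (if 1 \<le> s!1 \<and> s!2 = s!1 then 1
        else if 1 \<le> s!1 \<and> s!2 = s!1 - 1 \<and> s!0 = 0 then -1 else 0)
     else (if 1 \<le> s!2 \<and> s!1 = s!2 then 1
        else if 1 \<le> s!2 \<and> s!1 = s!2 - 1 \<and> s!0 = 0 then -1 else 0))"

definition Zs :: "nat \<Rightarrow> real \<Rightarrow> real" where "Zs n a = (\<Sum>i<Suc n. a^i)"
definition V :: "nat \<Rightarrow> real \<Rightarrow> real list" where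
  "V n a = map (\<lambda>k. a^k / Zs n a) [0..<Suc n]"

lemma G00: "dev_payoff [2,m,m] (gpay f n) 0 0 \<sigma> = 0"
  by (simp add: dev0 gpay_def)

lemma G01: "dev_payoff [2,m,m] (gpay f n) 0 1 \<sigma> = (\<Sum>y<m. \<Sum>z<m. cf f n y z * (\<sigma>!1!y * \<sigma>!2!z))"
  by (simp add: dev0 gpay_def)

lemma G10: assumes "0 < m" shows "dev_payoff [2,m,m] (gpay f n) 1 0 \<sigma> = 0"
  unfolding dev1[OF assms] by (simp add: gpay_def)

lemma G20: assumes "0 < m" shows "dev_payoff [2,m,m] (gpay f n) 2 0 \<sigma> = 0"
  unfolding dev2[OF assms] by (simp add: gpay_def)

lemma G1: assumes "1 \<le> j" "j < m"
  shows "dev_payoff [2,m,m] (gpay f n) 1 j \<sigma> = (\<sigma>!0!0 + \<sigma>!0!1) * \<sigma>!2!j - \<sigma>!0!0 * \<sigma>!2!(j-1)"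
proof -
  have "dev_payoff [2,m,m] (gpay f n) 1 j \<sigma> =
    (\<Sum>x<2. \<Sum>z<m. ((if z = j then \<sigma>!0!x * \<sigma>!2!z else 0) + (if x = 0 then (if z = j - 1 then - (\<sigma>!0!x * \<sigma>!2!z) else 0) else 0)))"
    unfolding dev1[OF assms(2)] using assms by (auto simp: gpay_def intro!: sum.cong)
  also have "\<dots> = (\<Sum>x<2. (\<sigma>!0!x * \<sigma>!2!j) + (if x = 0 then - (\<sigma>!0!x * \<sigma>!2!(j-1)) else 0))"
    using assms by (intro sum.cong refl) (simp add: sum.distrib sum.delta' sum.If_cases)
  also have "\<dots> = (\<sigma>!0!0 + \<sigma>!0!1) * \<sigma>!2!j - \<sigma>!0!0 * \<sigma>!2!(j-1)"
    by (simp add: numeral_2_eq_2 algebra_simps)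
  finally show ?thesis .
qed

lemma G2: assumes "1 \<le> j" "j < m"
  shows "dev_payoff [2,m,m] (gpay f n) 2 j \<sigma> = (\<sigma>!0!0 + \<sigma>!0!1) * \<sigma>!1!j - \<sigma>!0!0 * \<sigma>!1!(j-1)"
proof -
  have "dev_payoff [2,m,m] (gpay f n) 2 j \<sigma> =
    (\<Sum>x<2. \<Sum>z<m. ((if z = j then \<sigma>!0!x * \<sigma>!1!z else 0) + (if x = 0 then (if z = j - 1 then - (\<sigma>!0!x * \<sigma>!1!z) else 0) else 0)))"
    unfolding dev2[OF assms(2)] using assms by (auto simp: gpay_def intro!: sum.cong)
  also have "\<dots> = (\<Sum>x<2. (\<sigma>!0!x * \<sigma>!1!j) + (if x = 0 then - (\<sigma>!0!x * \<sigma>!1!(j-1)) else 0))"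
    using assms by (intro sum.cong refl) (simp add: sum.distrib sum.delta' sum.If_cases)
  also have "\<dots> = (\<sigma>!0!0 + \<sigma>!0!1) * \<sigma>!1!j - \<sigma>!0!0 * \<sigma>!1!(j-1)"
    by (simp add: numeral_2_eq_2 algebra_simps)
  finally show ?thesis .
qed

lemma cf_sum: assumes "degree f \<le> 2*n"
  shows "(\<Sum>y<Suc n. \<Sum>z<Suc n. cf f n y z * (a^y * a^z)) = poly f a"
proof -
  have "(\<Sum>y<Suc n. \<Sum>z<Suc n. cf f n y z * (a^y * a^z))
     = (\<Sum>y<n. \<Sum>z<Suc n. cf f n y z * (a^y * a^z)) + (\<Sum>z<Suc n. cf f n n z * (a^n * a^z))"
    by simp
  also have "(\<Sum>y<n. \<Sum>z<Suc n. cf f n y z * (a^y * a^z)) = (\<Sum>y<n. coeff f y * a^y)"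
  proof (rule sum.cong)
    fix y assume "y \<in> {..<n}"
    hence "\<And>z. cf f n y z * (a^y * a^z) = (if z = 0 then coeff f y * a^y else 0)" by (auto simp: cf_def)
    thus "(\<Sum>z<Suc n. cf f n y z * (a^y * a^z)) = coeff f y * a^y" by (simp only: sum.delta') simp
  qed simp
  also have "(\<Sum>z<Suc n. cf f n n z * (a^n * a^z)) = (\<Sum>z<Suc n. coeff f (n+z) * a^(n+z))"
    by (rule sum.cong) (auto simp: cf_def power_add)
  also have "(\<Sum>z<Suc n. coeff f (n+z) * a^(n+z)) = (\<Sum>l\<in>{n..<2*n+1}. coeff f l * a^l)"
    by (rule sum.reindex_bij_witness[where i="\<lambda>l. l - n" and j="\<lambda>z. n + z"]) auto
  also have "(\<Sum>y<n. coeff f y * a^y) + (\<Sum>l\<in>{n..<2*n+1}. coeff f l * a^l) = (\<Sum>l<2*n+1. coeff f l * a^l)"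
    by (simp add: lessThan_atLeast0 sum.atLeastLessThan_concat)
  also have "\<dots> = poly f a"
    unfolding poly_altdef
    by (rule sum.mono_neutral_right) (use assms in \<open>auto simp: coeff_eq_0\<close>)
  finally show ?thesis .
qed



lemma Zs_ge1: "0 \<le> a \<Longrightarrow> 1 \<le> Zs n a"
proof -
  assume a: "0 \<le> a"
  have "Zs n a = 1 + (\<Sum>i\<in>{..<Suc n} - {0}. a^i)" unfolding Zs_def
    by (subst sum.remove[of _ 0]) auto
  moreover have "0 \<le> (\<Sum>i\<in>{..<Suc n} - {0}. a^i)" using a by (intro sum_nonneg) auto
  ultimately show ?thesis by simp
qed

lemma V_nth: "k < Suc n \<Longrightarrow> V n a ! k = a^k / Zs n a"
  unfolding V_def by (simp del: upt_Suc)

lemma V_len: "length (V n a) = Suc n" unfolding V_def by simp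

lemma V_sum: "0 \<le> a \<Longrightarrow> sum_list (V n a) = 1"
proof -
  assume a: "0 \<le> a"
  have "sum_list (V n a) = (\<Sum>k<Suc n. V n a ! k)"
    by (simp add: sum_list_sum_nth V_len lessThan_atLeast0 del: upt_Suc)
  also have "\<dots> = (\<Sum>k<Suc n. a^k / Zs n a)" by (intro sum.cong refl) (simp add: V_nth)
  also have "\<dots> = 1" using Zs_ge1[OF a, of n] by (simp add: sum_divide_distrib[symmetric] Zs_def)
  finally show ?thesis .
qed

lemma V_pos: "0 < a \<Longrightarrow> k < Suc n \<Longrightarrow> 0 < V n a ! k"
  using Zs_ge1[of a n] by (simp add: V_nth)

lemma V_lt1: assumes "0 < a" "1 \<le> n" "k < Suc n" shows "V n a ! k < 1"
proof -
  define k' where "k' = (if k = 0 then 1 else (0::nat))"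
  have k': "k' < Suc n" "k' \<noteq> k" using assms(2) unfolding k'_def by auto
  have "Zs n a = a^k + (\<Sum>i\<in>{..<Suc n} - {k}. a^i)" unfolding Zs_def
    by (subst sum.remove[of _ k]) (use assms in auto)
  moreover have "(\<Sum>i\<in>{..<Suc n} - {k}. a^i) = a^k' + (\<Sum>i\<in>{..<Suc n} - {k} - {k'}. a^i)"
    by (subst sum.remove[of _ k']) (use k' in auto)
  moreover have "0 \<le> (\<Sum>i\<in>{..<Suc n} - {k} - {k'}. a^i)" using assms by (intro sum_nonneg) auto
  moreover have "0 < a^k'" using assms by simp
  ultimately have "a^k < Zs n a" by linarith
  thus ?thesis using assms Zs_ge1[of a n] by (simp add: V_nth)
qed

lemma V_rec: "1 \<le> j \<Longrightarrow> j < Suc n \<Longrightarrow> V n a ! j = a * V n a ! (j-1)"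
proof -
  assume j: "1 \<le> j" "j < Suc n"
  then obtain i where i: "j = Suc i" by (cases j) auto
  show ?thesis using j unfolding i by (simp add: V_nth)
qed

lemma geo: assumes "length v = Suc n" "\<forall>j. 1 \<le> j \<and> j < Suc n \<longrightarrow> v!j = a * v!(j-1)"
  "sum_list v = 1" "0 \<le> a" shows "v = V n a"
proof -
  have pw: "k < Suc n \<longrightarrow> v!k = a^k * v!0" for k
  proof (induction k)
    case (Suc k)
    show ?case
    proof
      assume sk: "Suc k < Suc n"
      have "v ! Suc k = a * v ! k" using assms(2) sk by fastforce
      also have "\<dots> = a * (a^k * v!0)" using Suc.IH sk by simp
      finally show "v ! Suc k = a ^ Suc k * v ! 0" by simp
    qed
  qed simp
  have "1 = (\<Sum>k<Suc n. v!k)" using assms(1,3)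
    by (simp only: sum_list_sum_nth lessThan_atLeast0)
  also have "\<dots> = (\<Sum>k<Suc n. a^k * v!0)" by (intro sum.cong refl) (use pw in blast)
  also have "\<dots> = v!0 * Zs n a" unfolding Zs_def by (simp only: sum_distrib_left mult.commute)
  finally have v0: "v!0 = 1 / Zs n a" using Zs_ge1[OF assms(4), of n] by (simp add: field_simps)
  show ?thesis
  proof (rule nth_equalityI)
    show "length v = length (V n a)" by (simp add: V_len assms(1))
    fix k assume "k < length v"
    hence k: "k < Suc n" using assms(1) by simp
    have "v!k = a^k * v!0" using pw k by blast
    also have "\<dots> = a^k / Zs n a" by (simp add: v0)
    finally show "v!k = V n a ! k" using V_nth[OF k] by simp
  qed
qed

lemma V_cf: assumes "degree f \<le> 2*n"
  shows "(\<Sum>y<Suc n. \<Sum>z<Suc n. cf f n y z * (V n a!y * V n a!z)) = poly f a / (Zs n a)^2"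
proof -
  have "(\<Sum>y<Suc n. \<Sum>z<Suc n. cf f n y z * (V n a!y * V n a!z))
     = (\<Sum>y<Suc n. \<Sum>z<Suc n. cf f n y z * (a^y * a^z) / (Zs n a)^2)"
    by (intro sum.cong refl) (simp add: V_nth power2_eq_square)
  also have "\<dots> = (\<Sum>y<Suc n. \<Sum>z<Suc n. cf f n y z * (a^y * a^z)) / (Zs n a)^2"
    by (simp only: sum_divide_distrib)
  finally show ?thesis using cf_sum[OF assms] by simp
qed



definition prof :: "nat \<Rightarrow> real \<Rightarrow> real list list" where
  "prof n a = [[a, 1 - a], V n a, V n a]"

lemma less3: "(i::nat) < 3 \<longleftrightarrow> i = 0 \<or> i = 1 \<or> i = 2" by auto
lemma less2: "(i::nat) < 2 \<longleftrightarrow> i = 0 \<or> i = 1" by auto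

lemma NE_prof:
  assumes deg: "degree f \<le> 2*n" and n1: "1 \<le> n" and a: "0 < a" "a < 1" "poly f a = 0"
  shows "totally_mixed_NE [2, Suc n, Suc n] (gpay f n) (prof n a)"
proof -
  have mp: "mixed_profile [2, Suc n, Suc n] (prof n a)"
    unfolding mixed_profile_def prof_def using a
    by (auto simp: less_Suc_eq less2 V_len V_sum V_pos less_imp_le)
  have tm: "\<forall>i<length [2, Suc n, Suc n]. \<forall>j<[2, Suc n, Suc n]!i. 0 < prof n a!i!j \<and> prof n a!i!j < 1"
    unfolding prof_def using a n1
    by (auto simp: less_Suc_eq less2 V_pos V_lt1)
  have d0: "dev_payoff [2, Suc n, Suc n] (gpay f n) 0 1 (prof n a) = dev_payoff [2, Suc n, Suc n] (gpay f n) 0 0 (prof n a)"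
    unfolding G00 G01 using V_cf[OF deg, of a] a by (simp add: prof_def)
  have d1: "dev_payoff [2, Suc n, Suc n] (gpay f n) 1 j (prof n a) = dev_payoff [2, Suc n, Suc n] (gpay f n) 1 0 (prof n a)"
    if "1 \<le> j" "j < Suc n" for j
    using G1[OF that, of f n "prof n a"] G10[of "Suc n" f n "prof n a"] V_rec[OF that, of a] by (simp add: prof_def)
  have d2: "dev_payoff [2, Suc n, Suc n] (gpay f n) 2 j (prof n a) = dev_payoff [2, Suc n, Suc n] (gpay f n) 2 0 (prof n a)"
    if "1 \<le> j" "j < Suc n" for j
    using G2[OF that, of f n "prof n a"] G20[of "Suc n" f n "prof n a"] V_rec[OF that, of a] by (simp add: prof_def)
  have "\<forall>i<length [2, Suc n, Suc n]. \<forall>j. 1 \<le> j \<and> j < [2, Suc n, Suc n]!i \<longrightarrow>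
        dev_payoff [2, Suc n, Suc n] (gpay f n) i j (prof n a) = dev_payoff [2, Suc n, Suc n] (gpay f n) i 0 (prof n a)"
  proof (intro allI impI)
    fix i j assume i: "i < length [2, Suc n, Suc n]" and j: "1 \<le> j \<and> j < [2, Suc n, Suc n]!i"
    consider "i = 0" | "i = 1" | "i = 2" using i by (auto simp: less_Suc_eq)
    thus "dev_payoff [2, Suc n, Suc n] (gpay f n) i j (prof n a) = dev_payoff [2, Suc n, Suc n] (gpay f n) i 0 (prof n a)"
    proof cases
      case 1 then have "j = 1" using j by simp
      thus ?thesis using d0 1 by simp
    next
      case 2 thus ?thesis using d1 j by simp
    next
      case 3 thus ?thesis using d2 j by simp
    qed
  qed
  thus ?thesis unfolding totally_mixed_NE_def using mp tm by blast
qed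

lemma NE_is_prof:
  assumes deg: "degree f \<le> 2*n" and n1: "1 \<le> n"
    and ne: "totally_mixed_NE [2, Suc n, Suc n] (gpay f n) \<sigma>"
  shows "\<sigma> = prof n (\<sigma>!0!0) \<and> 0 < \<sigma>!0!0 \<and> \<sigma>!0!0 < 1 \<and> poly f (\<sigma>!0!0) = 0"
proof -
  define a where "a = \<sigma>!0!0"
  have mp: "mixed_profile [2, Suc n, Suc n] \<sigma>" using ne unfolding totally_mixed_NE_def by blast
  have tm: "\<And>i j. i < 3 \<Longrightarrow> j < [2, Suc n, Suc n]!i \<Longrightarrow> 0 < \<sigma>!i!j \<and> \<sigma>!i!j < 1"
    using ne unfolding totally_mixed_NE_def by simp
  have eq: "\<And>i j. i < 3 \<Longrightarrow> 1 \<le> j \<Longrightarrow> j < [2, Suc n, Suc n]!i \<Longrightarrow>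
        dev_payoff [2, Suc n, Suc n] (gpay f n) i j \<sigma> = dev_payoff [2, Suc n, Suc n] (gpay f n) i 0 \<sigma>"
    using ne unfolding totally_mixed_NE_def by simp
  have len: "length \<sigma> = 3" using mp unfolding mixed_profile_def by simp
  have mpi: "\<And>i. i < 3 \<Longrightarrow> length (\<sigma>!i) = [2, Suc n, Suc n]!i \<and> (\<forall>j<[2, Suc n, Suc n]!i. 0 \<le> \<sigma>!i!j) \<and> sum_list (\<sigma>!i) = 1"
    using mp unfolding mixed_profile_def by simp
  have l0: "length (\<sigma>!0) = 2" and s0: "sum_list (\<sigma>!0) = 1" using mpi[of 0] by auto
  have s0': "\<sigma>!0!0 + \<sigma>!0!1 = 1"
  proof -
    have "\<sigma>!0 = [\<sigma>!0!0, \<sigma>!0!1]" using l0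
      by (auto intro!: nth_equalityI simp: less2)
    thus ?thesis using s0 by (metis add.right_neutral sum_list.Cons sum_list.Nil)
  qed
  have a0: "0 < a" "a < 1" using tm[of 0 0] unfolding a_def by auto
  have v0: "\<sigma>!0 = [a, 1 - a]" using l0 s0' unfolding a_def
    by (auto intro!: nth_equalityI simp: less2)
  have v2: "\<sigma>!2 = V n a"
  proof (rule geo)
    show "length (\<sigma>!2) = Suc n" using mpi[of 2] by simp
    show "sum_list (\<sigma>!2) = 1" using mpi[of 2] by simp
    show "0 \<le> a" using a0 by simp
    show "\<forall>j. 1 \<le> j \<and> j < Suc n \<longrightarrow> \<sigma>!2!j = a * \<sigma>!2!(j-1)"
    proof (intro allI impI)
      fix j assume j: "1 \<le> j \<and> j < Suc n"
      have "dev_payoff [2, Suc n, Suc n] (gpay f n) 1 j \<sigma> = dev_payoff [2, Suc n, Suc n] (gpay f n) 1 0 \<sigma>"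
        using eq[of 1 j] j by simp
      with G1[of j "Suc n" f n \<sigma>] G10[of "Suc n" f n \<sigma>] j s0'
      show "\<sigma>!2!j = a * \<sigma>!2!(j-1)" unfolding a_def by simp
    qed
  qed
  have v1: "\<sigma>!1 = V n a"
  proof (rule geo)
    show "length (\<sigma>!1) = Suc n" using mpi[of 1] by simp
    show "sum_list (\<sigma>!1) = 1" using mpi[of 1] by simp
    show "0 \<le> a" using a0 by simp
    show "\<forall>j. 1 \<le> j \<and> j < Suc n \<longrightarrow> \<sigma>!1!j = a * \<sigma>!1!(j-1)"
    proof (intro allI impI)
      fix j assume j: "1 \<le> j \<and> j < Suc n"
      have "dev_payoff [2, Suc n, Suc n] (gpay f n) 2 j \<sigma> = dev_payoff [2, Suc n, Suc n] (gpay f n) 2 0 \<sigma>"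
        using eq[of 2 j] j by simp
      with G2[of j "Suc n" f n \<sigma>] G20[of "Suc n" f n \<sigma>] j s0'
      show "\<sigma>!1!j = a * \<sigma>!1!(j-1)" unfolding a_def by simp
    qed
  qed
  have sp: "\<sigma> = prof n a" unfolding prof_def using len v0 v1 v2
    by (auto intro!: nth_equalityI simp: less3)
  have "dev_payoff [2, Suc n, Suc n] (gpay f n) 0 1 \<sigma> = dev_payoff [2, Suc n, Suc n] (gpay f n) 0 0 \<sigma>"
    using eq[of 0 1] by simp
  hence "poly f a / (Zs n a)^2 = 0"
    unfolding G00 G01 using V_cf[OF deg, of a] v1 v2 by simp
  hence "poly f a = 0" using Zs_ge1[of a n] a0 by simp
  thus ?thesis using sp a0 unfolding a_def by simp
qed



theorem theorem3:
  fixes f :: "real poly"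
  assumes "degree f \<ge> 1"
  shows "\<exists>u :: nat \<Rightarrow> nat list \<Rightarrow> real.
    (let m = nat \<lceil>real (degree f) / 2\<rceil> + 1;
         ns = [2, m, m];
         E = {\<sigma>. totally_mixed_NE ns u \<sigma>};
         S = {a::real. 0 < a \<and> a < 1 \<and> poly f a = 0}
     in (\<lambda>\<sigma>. \<sigma>!0!0) ` E = S \<and> finite E \<and> card E = card S)"
proof -
  define n where "n = nat \<lceil>real (degree f) / 2\<rceil>"
  have c1: "real (degree f) / 2 \<le> of_int \<lceil>real (degree f) / 2\<rceil>" by (rule le_of_int_ceiling)
  have c2: "0 < \<lceil>real (degree f) / 2\<rceil>" using assms by simp
  have n1: "1 \<le> n" unfolding n_def using c2 by linarith
  have deg: "degree f \<le> 2*n"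
  proof -
    have "real n = of_int \<lceil>real (degree f) / 2\<rceil>" unfolding n_def using c2 by simp
    hence "real (degree f) \<le> 2 * real n" using c1 by linarith
    thus ?thesis by linarith
  qed
  define S where "S = {a::real. 0 < a \<and> a < 1 \<and> poly f a = 0}"
  define E where "E = {\<sigma>. totally_mixed_NE [2, Suc n, Suc n] (gpay f n) \<sigma>}"
  have ES: "E = prof n ` S"
  proof
    show "E \<subseteq> prof n ` S"
    proof
      fix \<sigma> assume "\<sigma> \<in> E"
      hence "\<sigma> = prof n (\<sigma>!0!0) \<and> 0 < \<sigma>!0!0 \<and> \<sigma>!0!0 < 1 \<and> poly f (\<sigma>!0!0) = 0"
        using NE_is_prof[OF deg n1] unfolding E_def by blast
      thus "\<sigma> \<in> prof n ` S" unfolding S_def by blast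
    qed
    show "prof n ` S \<subseteq> E" unfolding S_def E_def using NE_prof[OF deg n1] by blast
  qed
  have p00: "prof n a ! 0 ! 0 = a" for a by (simp add: prof_def)
  have inj: "inj_on (prof n) S" by (rule inj_onI) (metis p00)
  have f0: "f \<noteq> 0" using assms by auto
  have finS: "finite S" unfolding S_def
    by (rule finite_subset[OF _ poly_roots_finite[OF f0]]) auto
  have "(\<lambda>\<sigma>. \<sigma>!0!0) ` E = S \<and> finite E \<and> card E = card S"
    unfolding ES using finS inj by (simp add: image_image p00 card_image)
  thus ?thesis unfolding S_def E_def n_def Let_def
    by (intro exI[of _ "gpay f n"]) (simp add: n_def)
qed

end
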